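(* Let ${\mathbb E}$, ${\mathbb W}$ be finite-dimensional Euclidean spaces, ${\mathcal A}:{\mathbb E}\to{\mathbb W}$ linear, $L={\mathcal A}^*({\mathbb W})\subseteq{\mathbb E}$, $\mathcal{K}\subseteq{\mathbb E}$ a convex cone and $C\in{\mathbb E}$, and suppose ${\mathcal F}=\{Z\in\mathcal{K}: Z=C-{\mathcal A}^*y \text{ for some } y\in{\mathbb W}\}\ne\emptyset$. Let $P$ denote the orthogonal projection of ${\mathbb E}$ onto $L^\perp$ (so that $P(\mathcal{K})$ is the quotient cone $\mathcal{K}/L$ and $P(C)$ represents $C/L$). Then the singularity degree of the system ${\mathcal F}$ over $\mathcal{K}$ equals the singularity degree of $\operatorname{face}(P(C),P(\mathcal{K}))$ over $P(\mathcal{K})$. Moreover, if ${\mathcal M}:{\mathbb E}\to{\mathbb F}$ is a surjective linear map with $\operatorname{Null}({\mathcal M})=L$ and $b={\mathcal M}(C)$, then ${\mathcal M}$ induces an isomorphism of the cones $\mathcal{K}/L$ and ${\mathcal M}(\mathcal{K})$, and this singularity degree also equals the singularity degree of the system $\{X\in\mathcal{K}:{\mathcal M}(X)=b\}$.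
   Context: Singularity degree of a system $\{X\in\mathcal{K}:{\mathcal M}(X)=b\}$: the minimum number $k$ of facial reduction steps ${\mathcal F}_0=\mathcal{K}$, ${\mathcal F}_{i+1}={\mathcal F}_i\cap({\mathcal M}^*v_i)^\perp$ with ${\mathcal M}^*v_i\in{\mathcal F}_i^*\setminus{\mathcal F}_i^\perp$, $\langle v_i,b\rangle=0$, reaching the smallest face of $\mathcal{K}$ containing the feasible set. For the nullspace-form system $\{Z\in\mathcal{K}:Z\in C+L\}$ the steps use exposing vectors $W_i\in{\mathcal F}_i^*\setminus{\mathcal F}_i^\perp$ with $W_i\in L^\perp$ and $\langle W_i,C\rangle=0$, reaching the smallest face of $\mathcal{K}$ containing the feasible set. Singularity degree of a face $G_t$ of a cone $G$: minimum number $d$ of steps $G_0=G$, $G_{i+1}=G_i\cap d_i^\perp$, $d_i\in G_i^*\setminus G_i^\perp$, $d_i\perp G_t$, with $G_d=G_t$. $\operatorname{face}(x,G)$ is the smallest face of $G$ containing $x$. *)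

theory Defs
  imports "HOL-Analysis.Analysis"
begin

definition dual_cone :: "'a::real_inner set \<Rightarrow> 'a set" where
  "dual_cone S = {y. \<forall>x\<in>S. 0 \<le> y \<bullet> x}"

definition annih :: "'a::real_inner set \<Rightarrow> 'a set" where
  "annih S = {y. \<forall>x\<in>S. y \<bullet> x = 0}"

definition min_face :: "'a::real_vector set \<Rightarrow> 'a set \<Rightarrow> 'a set" where
  "min_face S G = \<Inter>{F. F face_of G \<and> S \<subseteq> F}"

definition face_pt :: "'a::real_vector \<Rightarrow> 'a set \<Rightarrow> 'a set" where
  "face_pt x G = min_face {x} G"

definition orth_proj :: "'a::real_inner set \<Rightarrow> 'a \<Rightarrow> 'a" where
  "orth_proj S x = (THE p. p \<in> S \<and> x - p \<in> orthogonal_comp S)"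

definition FR_seq_std ::
  "('a::euclidean_space \<Rightarrow> 'c::euclidean_space) \<Rightarrow> 'c \<Rightarrow> 'a set \<Rightarrow> nat \<Rightarrow> bool" where
  "FR_seq_std M b K k \<longleftrightarrow>
     (\<exists>Fs :: nat \<Rightarrow> 'a set. \<exists>vs :: nat \<Rightarrow> 'c.
        Fs 0 = K \<and>
        (\<forall>i<k. Fs (Suc i) = Fs i \<inter> annih {adjoint M (vs i)} \<and>
               adjoint M (vs i) \<in> dual_cone (Fs i) - annih (Fs i) \<and>
               vs i \<bullet> b = 0) \<and>
        Fs k = min_face {X \<in> K. M X = b} K)"

definition sing_deg_std ::
  "('a::euclidean_space \<Rightarrow> 'c::euclidean_space) \<Rightarrow> 'c \<Rightarrow> 'a set \<Rightarrow> enat" where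
  "sing_deg_std M b K = Inf (enat ` {k. FR_seq_std M b K k})"

definition FR_seq_null :: "'a::euclidean_space set \<Rightarrow> 'a \<Rightarrow> 'a set \<Rightarrow> nat \<Rightarrow> bool" where
  "FR_seq_null L C K k \<longleftrightarrow>
     (\<exists>Fs :: nat \<Rightarrow> 'a set. \<exists>Ws :: nat \<Rightarrow> 'a.
        Fs 0 = K \<and>
        (\<forall>i<k. Fs (Suc i) = Fs i \<inter> annih {Ws i} \<and>
               Ws i \<in> dual_cone (Fs i) - annih (Fs i) \<and>
               Ws i \<in> orthogonal_comp L \<and>
               Ws i \<bullet> C = 0) \<and>
        Fs k = min_face {Z \<in> K. Z \<in> (\<lambda>l. C + l) ` L} K)"

definition sing_deg_null :: "'a::euclidean_space set \<Rightarrow> 'a \<Rightarrow> 'a set \<Rightarrow> enat" where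
  "sing_deg_null L C K = Inf (enat ` {k. FR_seq_null L C K k})"

definition FR_seq_face :: "'a::euclidean_space set \<Rightarrow> 'a set \<Rightarrow> nat \<Rightarrow> bool" where
  "FR_seq_face Gt G k \<longleftrightarrow>
     (\<exists>Gs :: nat \<Rightarrow> 'a set. \<exists>ds :: nat \<Rightarrow> 'a.
        Gs 0 = G \<and>
        (\<forall>i<k. Gs (Suc i) = Gs i \<inter> annih {ds i} \<and>
               ds i \<in> dual_cone (Gs i) - annih (Gs i) \<and>
               ds i \<in> annih Gt) \<and>
        Gs k = Gt)"

definition sing_deg_face :: "'a::euclidean_space set \<Rightarrow> 'a set \<Rightarrow> enat" where
  "sing_deg_face Gt G = Inf (enat ` {k. FR_seq_face Gt G k})"

end

theory Submission imports Defs begin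

lemma face_cone_scale:
  assumes F: "F face_of K" and K: "cone K" and y: "y \<in> F" and c: "c > 0"
  shows "c *\<^sub>R y \<in> F"
proof (cases "c = 1 \<or> y = 0")
  case True then show ?thesis using y by auto
next
  case False
  have yK: "y \<in> K" using F y face_of_imp_subset by blast
  show ?thesis
  proof (cases "c < 1")
    case True
    define u where "u = (1 - c) / (2 - c)"
    have c2: "2 - c > 0" using True by simp
    have u: "0 < u" "u < 1" using True c c2 by (auto simp: u_def divide_less_eq_1_pos)
    have c3: "c \<noteq> 2" using True by simp
    have uu: "u * (2 - c) = 1 - c" using c3 by (simp add: u_def)
    have "(1 - u) * c + u * 2 = c + u * (2 - c)" by (simp add: algebra_simps)
    then have e: "(1 - u) * c + u * 2 = 1" using uu by simp
    have "y = ((1 - u) * c + u * 2) *\<^sub>R y" using e by simp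
    also have "\<dots> = (1 - u) *\<^sub>R (c *\<^sub>R y) + u *\<^sub>R (2 *\<^sub>R y)" by (simp add: scaleR_add_left)
    finally have eq: "y = (1 - u) *\<^sub>R (c *\<^sub>R y) + u *\<^sub>R (2 *\<^sub>R y)" .
    have ne: "c *\<^sub>R y \<noteq> 2 *\<^sub>R y" using False True by auto
    have "y \<in> open_segment (c *\<^sub>R y) (2 *\<^sub>R y)"
      unfolding in_segment using ne u eq by blast
    moreover have "c *\<^sub>R y \<in> K" "2 *\<^sub>R y \<in> K" using K yK c unfolding cone_def by auto
    ultimately show ?thesis using face_ofD[OF F] y by blast
  next
    case False2: False
    then have c1: "c > 1" using False by auto
    define u where "u = 1 - 1 / c"
    have u: "0 < u" "u < 1" using c1 by (auto simp: u_def field_simps)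
    have eq: "y = (1 - u) *\<^sub>R (c *\<^sub>R y) + u *\<^sub>R 0" using c1 by (simp add: u_def)
    have ne: "c *\<^sub>R y \<noteq> 0" using False c by auto
    have "y \<in> open_segment (c *\<^sub>R y) 0"
      unfolding in_segment using ne u eq by blast
    moreover have "c *\<^sub>R y \<in> K" "0 \<in> K" using K yK c unfolding cone_def by (auto, metis scale_zero_left order_refl)
    ultimately show ?thesis using face_ofD[OF F] y by blast
  qed
qed

lemma face_cone_add:
  assumes F: "F face_of K" and cK: "convex K" and K: "cone K" and a: "a \<in> K" and b: "b \<in> K"
    and ab: "a + b \<in> F"
  shows "a \<in> F"
proof -
  have m: "(1/2) *\<^sub>R (a + b) \<in> F" using face_cone_scale[OF F K ab] by simp
  show ?thesis
  proof (cases "a = b")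
    case True
    then show ?thesis using m by (simp add: scaleR_add_right[symmetric])
  next
    case False
    have "(1/2) *\<^sub>R (a + b) \<in> open_segment a b"
      unfolding in_segment using False
      by (intro conjI exI[of _ "1/2"]) (auto simp: algebra_simps)
    then show ?thesis using face_ofD[OF F _ a b m] by blast
  qed
qed

lemma Gstar_face:
  assumes cT: "convex T" and T: "cone T" and p: "p \<in> T"
  shows "{y \<in> T. \<exists>e>0. p - e *\<^sub>R y \<in> T} face_of T"
proof -
  have add: "x + y \<in> T" if "x \<in> T" "y \<in> T" for x y using convex_cone cT T that by blast
  have sc: "c *\<^sub>R x \<in> T" if "x \<in> T" "c \<ge> 0" for x c using T that unfolding cone_def by blast
  have conv: "convex {y \<in> T. \<exists>e>0. p - e *\<^sub>R y \<in> T}"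
  proof (rule convexI)
    fix x y :: 'a and u v :: real
    assume x: "x \<in> {y \<in> T. \<exists>e>0. p - e *\<^sub>R y \<in> T}" and y: "y \<in> {y \<in> T. \<exists>e>0. p - e *\<^sub>R y \<in> T}"
      and uv: "0 \<le> u" "0 \<le> v" "u + v = 1"
    obtain e1 where e1: "e1 > 0" "p - e1 *\<^sub>R x \<in> T" using x by auto
    obtain e2 where e2: "e2 > 0" "p - e2 *\<^sub>R y \<in> T" using y by auto
    define e where "e = min e1 e2"
    have e: "e > 0" "e \<le> e1" "e \<le> e2" using e1 e2 by (auto simp: e_def)
    have gen: "p - e *\<^sub>R z \<in> T" if "e' > 0" "p - e' *\<^sub>R z \<in> T" "e \<le> e'" for z e'
    proof -
      have "(1 - e/e') *\<^sub>R p + (e/e') *\<^sub>R (p - e' *\<^sub>R z) \<in> T"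
        using that e by (intro convexD[OF cT p]) (auto simp: field_simps)
      moreover have "(1 - e/e') *\<^sub>R p + (e/e') *\<^sub>R (p - e' *\<^sub>R z) = p - e *\<^sub>R z"
        using that by (simp add: algebra_simps)
      ultimately show ?thesis by simp
    qed
    have px: "p - e *\<^sub>R x \<in> T" using gen[OF e1 e(2)] .
    have py: "p - e *\<^sub>R y \<in> T" using gen[OF e2 e(3)] .
    have "u *\<^sub>R (p - e *\<^sub>R x) + v *\<^sub>R (p - e *\<^sub>R y) \<in> T"
      using convexD[OF cT px py uv] .
    moreover have "u *\<^sub>R (p - e *\<^sub>R x) + v *\<^sub>R (p - e *\<^sub>R y) = p - e *\<^sub>R (u *\<^sub>R x + v *\<^sub>R y)"
    proof -
      have "u *\<^sub>R (p - e *\<^sub>R x) + v *\<^sub>R (p - e *\<^sub>R y) = (u + v) *\<^sub>R p - e *\<^sub>R (u *\<^sub>R x + v *\<^sub>R y)"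
        by (simp add: algebra_simps)
      then show ?thesis using uv by simp
    qed
    moreover have "u *\<^sub>R x + v *\<^sub>R y \<in> T" using convexD[OF cT _ _ uv] x y by auto
    ultimately show "u *\<^sub>R x + v *\<^sub>R y \<in> {y \<in> T. \<exists>e>0. p - e *\<^sub>R y \<in> T}" using e by auto
  qed
  show ?thesis
    unfolding face_of_def
  proof (intro conjI ballI impI)
    show "{y \<in> T. \<exists>e>0. p - e *\<^sub>R y \<in> T} \<subseteq> T" by auto
    show "convex {y \<in> T. \<exists>e>0. p - e *\<^sub>R y \<in> T}" by (rule conv)
  next
    fix a b x
    assume a: "a \<in> T" and b: "b \<in> T" and x: "x \<in> {y \<in> T. \<exists>e>0. p - e *\<^sub>R y \<in> T}"
      and seg: "x \<in> open_segment a b"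
    obtain t where t: "0 < t" "t < 1" "x = (1 - t) *\<^sub>R a + t *\<^sub>R b" using seg unfolding in_segment by auto
    obtain e where e: "e > 0" "p - e *\<^sub>R x \<in> T" using x by auto
    have "p - (e * (1 - t)) *\<^sub>R a = (p - e *\<^sub>R x) + (e * t) *\<^sub>R b"
      unfolding t(3) by (simp add: algebra_simps)
    moreover have "(p - e *\<^sub>R x) + (e * t) *\<^sub>R b \<in> T" using add[OF e(2) sc[OF b]] e t by auto
    ultimately have "p - (e * (1 - t)) *\<^sub>R a \<in> T" by metis
    then have 1: "a \<in> {y \<in> T. \<exists>e>0. p - e *\<^sub>R y \<in> T}" proof -
      have "e * (1 - t) > 0" using e t by simp
      then show ?thesis using a \<open>p - (e * (1 - t)) *\<^sub>R a \<in> T\<close> by blast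
    qed
    have "p - (e * t) *\<^sub>R b = (p - e *\<^sub>R x) + (e * (1 - t)) *\<^sub>R a"
      unfolding t(3) by (simp add: algebra_simps)
    moreover have "(p - e *\<^sub>R x) + (e * (1 - t)) *\<^sub>R a \<in> T" using add[OF e(2) sc[OF a]] e t by auto
    ultimately have "p - (e * t) *\<^sub>R b \<in> T" by metis
    then have 2: "b \<in> {y \<in> T. \<exists>e>0. p - e *\<^sub>R y \<in> T}" proof -
      have "e * t > 0" using e t by simp
      then show ?thesis using b \<open>p - (e * t) *\<^sub>R b \<in> T\<close> by blast
    qed
    show "a \<in> {y \<in> T. \<exists>e>0. p - e *\<^sub>R y \<in> T}" by (rule 1)
    show "b \<in> {y \<in> T. \<exists>e>0. p - e *\<^sub>R y \<in> T}" by (rule 2)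
  qed
qed

lemma face_vimage:
  assumes G: "G face_of (P ` K)" and lin: "linear P" and cK: "convex K"
  shows "(K \<inter> P -` G) face_of K"
  unfolding face_of_def
proof (intro conjI; (intro ballI impI)?)
  show "K \<inter> P -` G \<subseteq> K" by auto
  show "convex (K \<inter> P -` G)"
    by (intro convex_Int cK convex_linear_vimage lin face_of_imp_convex[OF G])
next
  fix a b x assume a: "a \<in> K" and b: "b \<in> K" and x: "x \<in> K \<inter> P -` G" and seg: "x \<in> open_segment a b"
  interpret linear P by fact
  obtain u where u: "0 < u" "u < 1" "x = (1 - u) *\<^sub>R a + u *\<^sub>R b" using seg unfolding in_segment by auto
  have Px: "P x = (1 - u) *\<^sub>R P a + u *\<^sub>R P b" using u by (simp add: add scale)
  show "a \<in> K \<inter> P -` G \<and> b \<in> K \<inter> P -` G"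
  proof (cases "P a = P b")
    case True
    then have "P x = P a" using Px by (simp add: scaleR_add_left[symmetric])
    then show ?thesis using a b x True by auto
  next
    case False
    have "P x \<in> open_segment (P a) (P b)" unfolding in_segment using False u Px by blast
    then have "P a \<in> G \<and> P b \<in> G" using face_ofD[OF G] a b x by blast
    then show ?thesis using a b by auto
  qed
qed

lemma chain_dec:
  assumes "\<forall>i<k. Fs (Suc i) = Fs i \<inter> X i" "i \<le> j" "j \<le> k"
  shows "Fs j \<subseteq> Fs i"
  using assms(2,3)
proof (induction j)
  case 0 then show ?case by simp
next
  case (Suc j)
  show ?case
  proof (cases "i = Suc j")
    case True then show ?thesis by simp
  next
    case False
    then have "i \<le> j" using Suc by simp
    then have "Fs j \<subseteq> Fs i" using Suc by simp
    moreover have "Fs (Suc j) \<subseteq> Fs j" using assms(1) Suc by auto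
    ultimately show ?thesis by blast
  qed
qed


locale psetup =
  fixes L :: "'a::euclidean_space set" and P :: "'a \<Rightarrow> 'a"
  assumes subL: "subspace L" and Pdef: "P = orth_proj (orthogonal_comp L)"
begin

lemma LL: "orthogonal_comp (orthogonal_comp L) = L"
  by (rule orthogonal_comp_self[OF subL])

lemma dec: "\<exists>!p. p \<in> orthogonal_comp L \<and> x - p \<in> orthogonal_comp (orthogonal_comp L)"
proof -
  have "x \<in> L + orthogonal_comp L" using subspace_sum_orthogonal_comp[OF subL] by simp
  then obtain l s where ls: "l \<in> L" "s \<in> orthogonal_comp L" "x = l + s" by (meson set_plus_elim)
  show ?thesis
  proof (rule ex1I[of _ s])
    show "s \<in> orthogonal_comp L \<and> x - s \<in> orthogonal_comp (orthogonal_comp L)" using ls LL by simp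
  next
    fix p assume p: "p \<in> orthogonal_comp L \<and> x - p \<in> orthogonal_comp (orthogonal_comp L)"
    have "p - s = (x - s) - (x - p)" by simp
    moreover have "(x - s) - (x - p) \<in> L"
    proof -
      have "x - s \<in> L" "x - p \<in> L" using p ls LL by auto
      then show ?thesis using subspace_diff[OF subL] by blast
    qed
    ultimately have 1: "p - s \<in> L" by simp
    have 2: "p - s \<in> orthogonal_comp L" using p ls subspace_diff[OF subspace_orthogonal_comp] by blast
    have "p - s = 0" using 1 2 orthogonal_Int_0[OF subL] by blast
    then show "p = s" by simp
  qed
qed

lemma PS: "P x \<in> orthogonal_comp L" and PL: "x - P x \<in> L"
  using theI'[OF dec[of x]] unfolding Pdef orth_proj_def LL by auto

lemma Puniq: "p \<in> orthogonal_comp L \<Longrightarrow> x - p \<in> L \<Longrightarrow> P x = p"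
  unfolding Pdef orth_proj_def using dec[of x] LL by (intro the1_equality) auto

lemma linP: "linear P"
proof (rule linearI)
  fix x y
  show "P (x + y) = P x + P y"
    apply (rule Puniq)
    using PS[of x] PS[of y] subspace_add[OF subspace_orthogonal_comp] apply blast
    using PL[of x] PL[of y] subspace_add[OF subL, of "x - P x" "y - P y"] by (simp add: algebra_simps)
next
  fix c :: real and x
  show "P (c *\<^sub>R x) = c *\<^sub>R P x"
    apply (rule Puniq)
    using PS[of x] subspace_scale[OF subspace_orthogonal_comp] apply blast
    using PL[of x] subspace_scale[OF subL, of "x - P x" c] by (simp add: algebra_simps)
qed

lemma orth_zero: "l \<in> L \<Longrightarrow> W \<in> orthogonal_comp L \<Longrightarrow> W \<bullet> l = 0"
  unfolding orthogonal_comp_def orthogonal_def by (auto simp: inner_commute)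

lemma PW: "W \<in> orthogonal_comp L \<Longrightarrow> W \<bullet> P x = W \<bullet> x"
proof -
  assume W: "W \<in> orthogonal_comp L"
  have "W \<bullet> x = W \<bullet> P x + W \<bullet> (x - P x)" by (simp add: inner_diff_right)
  then show ?thesis using orth_zero[OF PL W] by simp
qed

lemma Psym: "d \<bullet> P x = P d \<bullet> x"
proof -
  have "d \<bullet> P x = P x \<bullet> d" by (simp add: inner_commute)
  also have "\<dots> = P x \<bullet> P d" using PW[OF PS[of x], of d] by simp
  also have "\<dots> = P d \<bullet> P x" by (simp add: inner_commute)
  also have "\<dots> = P d \<bullet> x" using PW[OF PS[of d], of x] .
  finally show ?thesis .
qed

lemma Peq: "P x = P y \<longleftrightarrow> x - y \<in> L"
proof
  assume "P x = P y"
  then have "x - y = (x - P x) - (y - P y)" by simp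
  then show "x - y \<in> L" using PL[of x] PL[of y] subspace_diff[OF subL] by metis
next
  assume xy: "x - y \<in> L"
  have "x - P y = (x - y) + (y - P y)" by simp
  then have "x - P y \<in> L" using xy PL[of y] subspace_add[OF subL] by metis
  then show "P x = P y" using Puniq PS by blast
qed

lemma Pid: "s \<in> orthogonal_comp L \<Longrightarrow> P s = s"
  using Puniq[of s s] subspace_0[OF subL] by simp

end


context psetup begin

lemma PK_cc:
  assumes cK: "convex K" and coneK: "cone K"
  shows "convex (P ` K)" "cone (P ` K)"
proof -
  show "convex (P ` K)" by (rule convex_linear_image[OF linP cK])
  show "cone (P ` K)" unfolding cone_def
  proof (intro ballI allI impI)
    fix y and c :: real assume y: "y \<in> P ` K" and c: "0 \<le> c"
    then obtain x where "x \<in> K" "y = P x" by auto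
    then have "c *\<^sub>R y = P (c *\<^sub>R x)" "c *\<^sub>R x \<in> K" using linear_scale[OF linP] coneK c unfolding cone_def by auto
    then show "c *\<^sub>R y \<in> P ` K" by auto
  qed
qed

lemma G_props:
  assumes cK: "convex K" and coneK: "cone K" and pc: "P C \<in> P ` K"
  shows "face_pt (P C) (P ` K) face_of (P ` K)" "P C \<in> face_pt (P C) (P ` K)"
    "\<And>F. F face_of (P ` K) \<Longrightarrow> P C \<in> F \<Longrightarrow> face_pt (P C) (P ` K) \<subseteq> F"
proof -
  have "P ` K face_of P ` K" using face_of_refl[OF PK_cc(1)[OF cK coneK]] .
  then have ne: "{F. F face_of P ` K \<and> {P C} \<subseteq> F} \<noteq> {}" using pc by auto
  show "face_pt (P C) (P ` K) face_of (P ` K)" unfolding face_pt_def min_face_def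
    by (rule face_of_Inter[OF ne]) auto
  show "P C \<in> face_pt (P C) (P ` K)" unfolding face_pt_def min_face_def by auto
  show "\<And>F. F face_of (P ` K) \<Longrightarrow> P C \<in> F \<Longrightarrow> face_pt (P C) (P ` K) \<subseteq> F"
    unfolding face_pt_def min_face_def by auto
qed

lemma feas_eq: "{Z \<in> K. Z \<in> (\<lambda>l. C + l) ` L} = {Z \<in> K. P Z = P C}"
proof -
  have "Z \<in> (\<lambda>l. C + l) ` L \<longleftrightarrow> Z - C \<in> L" for Z
  proof
    assume "Z \<in> (\<lambda>l. C + l) ` L" then show "Z - C \<in> L" by auto
  next
    assume "Z - C \<in> L" then show "Z \<in> (\<lambda>l. C + l) ` L" by (intro image_eqI[of _ _ "Z - C"]) auto
  qed
  then show ?thesis using Peq by auto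
qed

lemma minface_eq:
  assumes cK: "convex K" and coneK: "cone K" and z: "z \<in> K" "P z = P C"
  shows "min_face {Z \<in> K. P Z = P C} K = K \<inter> P -` face_pt (P C) (P ` K)"
proof -
  define G where "G = face_pt (P C) (P ` K)"
  have pc: "P C \<in> P ` K" using z by (metis image_eqI)
  note Gp = G_props[OF cK coneK pc, folded G_def]
  have fv: "(K \<inter> P -` G) face_of K" by (rule face_vimage[OF Gp(1) linP cK])
  have sub1: "min_face {Z \<in> K. P Z = P C} K \<subseteq> K \<inter> P -` G"
    unfolding min_face_def using fv Gp(2) by (intro Inter_lower) auto
  have sub2: "K \<inter> P -` G \<subseteq> F" if F: "F face_of K" "{Z \<in> K. P Z = P C} \<subseteq> F" for F
  proof
    fix x assume x: "x \<in> K \<inter> P -` G"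
    have gs: "{y \<in> P ` K. \<exists>e>0. P C - e *\<^sub>R y \<in> P ` K} face_of P ` K"
      by (rule Gstar_face[OF PK_cc[OF cK coneK] pc])
    have "P C \<in> {y \<in> P ` K. \<exists>e>0. P C - e *\<^sub>R y \<in> P ` K}"
    proof -
      have "P C - (1/2) *\<^sub>R P C = (1/2) *\<^sub>R P C"
      proof -
        have h: "(1/2::real) *\<^sub>R P C + (1/2) *\<^sub>R P C = P C" by (simp add: scaleR_add_left[symmetric])
        show ?thesis by (subst (1) h[symmetric]) simp
      qed
      moreover have "(1/2) *\<^sub>R P C \<in> P ` K" using PK_cc(2)[OF cK coneK] pc unfolding cone_def by auto
      ultimately show ?thesis using pc by (intro CollectI conjI exI[of _ "1/2"]) auto
    qed
    then have "G \<subseteq> {y \<in> P ` K. \<exists>e>0. P C - e *\<^sub>R y \<in> P ` K}" using Gp(3)[OF gs] by blast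
    then obtain e where e: "e > 0" "P C - e *\<^sub>R P x \<in> P ` K" using x by blast
    then obtain u where u: "u \<in> K" "P C - e *\<^sub>R P x = P u" by auto
    have exK: "e *\<^sub>R x \<in> K" using x e coneK unfolding cone_def by auto
    have mK: "e *\<^sub>R x + u \<in> K" using convex_cone cK coneK exK u by blast
    have "P (e *\<^sub>R x + u) = e *\<^sub>R P x + P u" using linP by (simp add: linear_add linear_scale)
    also have "\<dots> = P C" using u(2) by (simp add: algebra_simps)
    finally have "e *\<^sub>R x + u \<in> F" using F mK by blast
    then have "e *\<^sub>R x \<in> F" by (rule face_cone_add[OF F(1) cK coneK exK u(1)])
    then have "(1/e) *\<^sub>R (e *\<^sub>R x) \<in> F" using face_cone_scale[OF F(1) coneK] e by (meson divide_pos_pos zero_less_one)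
    then show "x \<in> F" using e by simp
  qed
  have "K \<inter> P -` G \<subseteq> min_face {Z \<in> K. P Z = P C} K"
    unfolding min_face_def using sub2 by blast
  then show ?thesis using sub1 unfolding G_def by blast
qed

end


context psetup begin

lemma null_to_face:
  assumes cK: "convex K" and coneK: "cone K" and z: "z \<in> K" "P z = P C"
    and fr: "FR_seq_null L C K k"
  shows "FR_seq_face (face_pt (P C) (P ` K)) (P ` K) k"
proof -
  define G where "G = face_pt (P C) (P ` K)"
  have pc: "P C \<in> P ` K" using z by (metis image_eqI)
  note Gp = G_props[OF cK coneK pc, folded G_def]
  obtain Fs Ws where F0: "Fs 0 = K"
    and st: "\<forall>i<k. Fs (Suc i) = Fs i \<inter> annih {Ws i} \<and>
               Ws i \<in> dual_cone (Fs i) - annih (Fs i) \<and>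
               Ws i \<in> orthogonal_comp L \<and> Ws i \<bullet> C = 0"
    and Fk: "Fs k = min_face {Z \<in> K. Z \<in> (\<lambda>l. C + l) ` L} K"
    using fr unfolding FR_seq_null_def by blast
  have Fk': "Fs k = K \<inter> P -` G" using Fk feas_eq minface_eq[OF cK coneK z] G_def by simp
  have stF: "\<forall>i<k. Fs (Suc i) = Fs i \<inter> annih {Ws i}" using st by blast
  have img: "P ` Fs (Suc i) = P ` Fs i \<inter> annih {Ws i}" if i: "i < k" for i
  proof -
    have W: "Ws i \<in> orthogonal_comp L" using st i by blast
    have e: "P x \<bullet> Ws i = x \<bullet> Ws i" for x using PW[OF W, of x] by (simp add: inner_commute)
    show ?thesis using st i by (auto simp: annih_def e)
  qed
  have fc: "P ` Fs i face_of P ` K" if "i \<le> k" for i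
    using that
  proof (induction i)
    case 0 then show ?case using F0 face_of_refl PK_cc[OF cK coneK] by simp
  next
    case (Suc i)
    then have ik: "i < k" by simp
    have W: "Ws i \<in> orthogonal_comp L" and D: "Ws i \<in> dual_cone (Fs i)" using st ik by auto
    have ge: "Ws i \<bullet> y \<ge> 0" if "y \<in> P ` Fs i" for y
      using that D PW[OF W] unfolding dual_cone_def by auto
    have "(P ` Fs i \<inter> {y. Ws i \<bullet> y = 0}) face_of P ` Fs i"
      by (rule face_of_Int_supporting_hyperplane_ge[OF face_of_imp_convex[OF Suc.IH] ge]) (use Suc in auto)
    moreover have "P ` Fs i \<inter> {y. Ws i \<bullet> y = 0} = P ` Fs (Suc i)"
      using img[OF ik] by (auto simp: annih_def inner_commute)
    ultimately show ?case using face_of_trans Suc ik by auto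
  qed
  have Gk: "P ` Fs k = G"
  proof
    show "P ` Fs k \<subseteq> G" using Fk' by auto
    have "P C \<in> P ` Fs k" using Fk' z Gp(2) by (metis IntI image_eqI vimageI)
    then show "G \<subseteq> P ` Fs k" using Gp(3)[OF fc[of k]] by simp
  qed
  show ?thesis unfolding FR_seq_face_def G_def[symmetric]
  proof (intro exI[of _ "\<lambda>i. P ` Fs i"] exI[of _ Ws] conjI allI impI)
    show "P ` Fs 0 = P ` K" using F0 by simp
    show "P ` Fs k = G" by (rule Gk)
  next
    fix i assume i: "i < k"
    show "P ` Fs (Suc i) = P ` Fs i \<inter> annih {Ws i}" by (rule img[OF i])
    have W: "Ws i \<in> orthogonal_comp L" and D: "Ws i \<in> dual_cone (Fs i) - annih (Fs i)" using st i by auto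
    show "Ws i \<in> dual_cone (P ` Fs i) - annih (P ` Fs i)"
      using D PW[OF W] by (auto simp: dual_cone_def annih_def)
    have sub: "Fs k \<subseteq> Fs (Suc i)" by (rule chain_dec[OF stF]) (use i in auto)
    have "Fs (Suc i) \<subseteq> annih {Ws i}" using st i by auto
    then show "Ws i \<in> annih G" using sub PW[OF W] Gk[symmetric]
      by (auto simp: annih_def inner_commute)
  qed
qed

lemma face_to_null:
  assumes cK: "convex K" and coneK: "cone K" and z: "z \<in> K" "P z = P C"
    and fr: "FR_seq_face (face_pt (P C) (P ` K)) (P ` K) k"
  shows "FR_seq_null L C K k"
proof -
  define G where "G = face_pt (P C) (P ` K)"
  have pc: "P C \<in> P ` K" using z by (metis image_eqI)
  note Gp = G_props[OF cK coneK pc, folded G_def]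
  obtain Gs ds where G0: "Gs 0 = P ` K"
    and st: "\<forall>i<k. Gs (Suc i) = Gs i \<inter> annih {ds i} \<and>
               ds i \<in> dual_cone (Gs i) - annih (Gs i) \<and> ds i \<in> annih G"
    and Gk: "Gs k = G"
    using fr unfolding FR_seq_face_def G_def by blast
  have stG: "\<forall>i<k. Gs (Suc i) = Gs i \<inter> annih {ds i}" using st by blast
  have fe: "min_face {Z \<in> K. Z \<in> (\<lambda>l. C + l) ` L} K = K \<inter> P -` G"
    using feas_eq minface_eq[OF cK coneK z] G_def by simp
  show ?thesis unfolding FR_seq_null_def
  proof (intro exI[of _ "\<lambda>i. K \<inter> P -` Gs i"] exI[of _ "\<lambda>i. P (ds i)"] conjI allI impI)
    show "K \<inter> P -` Gs 0 = K" using G0 by auto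
    show "K \<inter> P -` Gs k = min_face {Z \<in> K. Z \<in> (\<lambda>l. C + l) ` L} K" using Gk fe by simp
  next
    fix i assume i: "i < k"
    have e: "P x \<bullet> ds i = x \<bullet> P (ds i)" for x using Psym[of "ds i" x] by (simp add: inner_commute)
    show "K \<inter> P -` Gs (Suc i) = K \<inter> P -` Gs i \<inter> annih {P (ds i)}"
      using st i by (auto simp: annih_def e)
    have D: "ds i \<in> dual_cone (Gs i)" "ds i \<notin> annih (Gs i)" using st i by auto
    have sub: "Gs i \<subseteq> Gs 0" by (rule chain_dec[OF stG]) (use i in auto)
    show "P (ds i) \<in> dual_cone (K \<inter> P -` Gs i) - annih (K \<inter> P -` Gs i)"
    proof
      show "P (ds i) \<in> dual_cone (K \<inter> P -` Gs i)"
        using D(1) Psym[of "ds i"] by (auto simp: dual_cone_def)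
      from D(2) obtain g where g: "g \<in> Gs i" "ds i \<bullet> g \<noteq> 0" unfolding annih_def by auto
      then obtain x where x: "x \<in> K" "g = P x" using sub G0 by auto
      then show "P (ds i) \<notin> annih (K \<inter> P -` Gs i)"
        using g Psym[of "ds i" x] unfolding annih_def by auto
    qed
    show "P (ds i) \<in> orthogonal_comp L" by (rule PS)
    have "ds i \<bullet> P C = 0" using st i Gp(2) by (auto simp: annih_def)
    then show "P (ds i) \<bullet> C = 0" using Psym by simp
  qed
qed

lemma sd_eq:
  assumes cK: "convex K" and coneK: "cone K" and z: "z \<in> K" "P z = P C"
  shows "sing_deg_null L C K = sing_deg_face (face_pt (P C) (P ` K)) (P ` K)"
proof -
  have "{k. FR_seq_null L C K k} = {k. FR_seq_face (face_pt (P C) (P ` K)) (P ` K) k}"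
    using null_to_face[OF cK coneK z] face_to_null[OF cK coneK z] by blast
  then show ?thesis unfolding sing_deg_null_def sing_deg_face_def by simp
qed

end


lemma std_null:
  fixes M :: "'a::euclidean_space \<Rightarrow> 'c::euclidean_space"
  assumes linM: "linear M" and ker: "{x. M x = 0} = L" and b: "b = M C"
  shows "FR_seq_std M b K k \<longleftrightarrow> FR_seq_null L C K k"
proof -
  have subR: "subspace (range (adjoint M))"
    by (rule linear_subspace_image[OF adjoint_linear[OF linM] subspace_UNIV])
  have "M -` {0} = orthogonal_comp (range (adjoint M))" by (rule ker_orthogonal_comp_adjoint[OF linM])
  then have "L = orthogonal_comp (range (adjoint M))" using ker by auto
  then have R: "orthogonal_comp L = range (adjoint M)" using orthogonal_comp_self[OF subR] by simp
  have fe: "{X \<in> K. M X = b} = {Z \<in> K. Z \<in> (\<lambda>l. C + l) ` L}"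
  proof -
    have "M X = b \<longleftrightarrow> X \<in> (\<lambda>l. C + l) ` L" for X
    proof
      assume "M X = b"
      then have "X - C \<in> L" using ker b linear_diff[OF linM] by auto
      then show "X \<in> (\<lambda>l. C + l) ` L" by (intro image_eqI[of _ _ "X - C"]) auto
    next
      assume "X \<in> (\<lambda>l. C + l) ` L"
      then obtain l where "l \<in> L" "X = C + l" by auto
      then show "M X = b" using ker b linear_add[OF linM] by auto
    qed
    then show ?thesis by auto
  qed
  have aw: "adjoint M v \<bullet> C = v \<bullet> b" for v
    using adjoint_works[OF linM, of C v] b by (simp add: inner_commute)
  show ?thesis
  proof
    assume "FR_seq_std M b K k"
    then obtain Fs vs where F0: "Fs 0 = K"
      and st: "\<forall>i<k. Fs (Suc i) = Fs i \<inter> annih {adjoint M (vs i)} \<and>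
               adjoint M (vs i) \<in> dual_cone (Fs i) - annih (Fs i) \<and> vs i \<bullet> b = 0"
      and Fk: "Fs k = min_face {X \<in> K. M X = b} K"
      unfolding FR_seq_std_def by blast
    show "FR_seq_null L C K k" unfolding FR_seq_null_def
      using F0 st Fk fe R aw
      by (intro exI[of _ Fs] exI[of _ "\<lambda>i. adjoint M (vs i)"]) auto
  next
    assume "FR_seq_null L C K k"
    then obtain Fs Ws where F0: "Fs 0 = K"
      and st: "\<forall>i<k. Fs (Suc i) = Fs i \<inter> annih {Ws i} \<and>
               Ws i \<in> dual_cone (Fs i) - annih (Fs i) \<and>
               Ws i \<in> orthogonal_comp L \<and> Ws i \<bullet> C = 0"
      and Fk: "Fs k = min_face {Z \<in> K. Z \<in> (\<lambda>l. C + l) ` L} K"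
      unfolding FR_seq_null_def by blast
    define vs where "vs i = (SOME v. adjoint M v = Ws i)" for i
    have vs: "adjoint M (vs i) = Ws i" if "i < k" for i
    proof -
      have "Ws i \<in> range (adjoint M)" using st that R by auto
      then have "\<exists>v. adjoint M v = Ws i" by auto
      then show ?thesis unfolding vs_def by (rule someI_ex)
    qed
    show "FR_seq_std M b K k" unfolding FR_seq_std_def
    proof (intro exI[of _ Fs] exI[of _ vs] conjI allI impI)
      show "Fs 0 = K" by (rule F0)
      show "Fs k = min_face {X \<in> K. M X = b} K" using Fk fe by simp
    next
      fix i assume i: "i < k"
      show "Fs (Suc i) = Fs i \<inter> annih {adjoint M (vs i)}" using st i vs[OF i] by simp
      show "adjoint M (vs i) \<in> dual_cone (Fs i) - annih (Fs i)" using st i vs[OF i] by simp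
      show "vs i \<bullet> b = 0" using st i vs[OF i] aw[of "vs i"] by simp
    qed
  qed
qed

theorem mainTheorem7:
  fixes A :: "'e::euclidean_space \<Rightarrow> 'w::euclidean_space"
    and K :: "'e set" and C :: 'e
  assumes linA: "linear A"
    and convK: "convex K" and coneK: "cone K"
    and feas: "{Z \<in> K. \<exists>y. Z = C - adjoint A y} \<noteq> {}"
  defines "L \<equiv> range (adjoint A)"
  defines "P \<equiv> orth_proj (orthogonal_comp L)"
  shows "sing_deg_null L C K = sing_deg_face (face_pt (P C) (P ` K)) (P ` K)
         \<and> (\<forall>(M :: 'e \<Rightarrow> 'f::euclidean_space) b.
           linear M \<and> surj M \<and> {x. M x = 0} = L \<and> b = M C \<longrightarrow>
           bij_betw M (orthogonal_comp L) UNIV \<and> M ` (P ` K) = M ` K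
           \<and> (\<forall>x. M (P x) = M x)
           \<and> sing_deg_std M b K = sing_deg_face (face_pt (P C) (P ` K)) (P ` K))"
proof -
  have subL: "subspace L" unfolding L_def
    by (rule linear_subspace_image[OF adjoint_linear[OF linA] subspace_UNIV])
  have ps: "psetup L P" using subL unfolding psetup_def P_def by simp
  interpret psetup L P by (rule ps)
  obtain z y where z: "z \<in> K" "z = C - adjoint A y" using feas by auto
  have "z - C \<in> L" using z subspace_neg[OF subL, of "adjoint A y"] unfolding L_def by auto
  then have zc: "P z = P C" using Peq by simp
  have sd: "sing_deg_null L C K = sing_deg_face (face_pt (P C) (P ` K)) (P ` K)"
    by (rule sd_eq[OF convK coneK z(1) zc])
  show ?thesis
  proof (rule conjI[OF sd], intro allI impI)
    fix M :: "'e \<Rightarrow> 'f" and b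
    assume asm: "linear M \<and> surj M \<and> {x. M x = 0} = L \<and> b = M C"
    then have linM: "linear M" and sM: "surj M" and ker: "{x. M x = 0} = L" and b: "b = M C" by auto
    have MP: "M (P x) = M x" for x
    proof -
      have "M (x - P x) = 0" using PL[of x] ker by auto
      then show ?thesis using linear_diff[OF linM] by simp
    qed
    have r1: "\<forall>x. M (P x) = M x" using MP by simp
    have r2: "M ` (P ` K) = M ` K" using MP by (simp add: image_image)
    have r3: "bij_betw M (orthogonal_comp L) UNIV" unfolding bij_betw_def
    proof
      show "inj_on M (orthogonal_comp L)"
      proof (rule inj_onI)
        fix x y assume x: "x \<in> orthogonal_comp L" and y: "y \<in> orthogonal_comp L" and e: "M x = M y"
        have "x - y \<in> L" using e ker linear_diff[OF linM] by auto
        moreover have "x - y \<in> orthogonal_comp L" using x y subspace_diff[OF subspace_orthogonal_comp] by blast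
        ultimately have "x - y = 0" using orthogonal_Int_0[OF subL] by blast
        then show "x = y" by simp
      qed
      show "M ` orthogonal_comp L = UNIV"
      proof (rule set_eqI, rule iffI)
        fix w assume "w \<in> (UNIV :: 'f set)"
        obtain x where "w = M x" using sM by (metis surjD)
        then have "w = M (P x)" using MP by simp
        then show "w \<in> M ` orthogonal_comp L" using PS by blast
      qed auto
    qed
    have "sing_deg_std M b K = sing_deg_null L C K"
      unfolding sing_deg_std_def sing_deg_null_def using std_null[OF linM ker b, of K] by (metis Collect_cong)
    then have "sing_deg_std M b K = sing_deg_face (face_pt (P C) (P ` K)) (P ` K)" using sd by simp
    then show "bij_betw M (orthogonal_comp L) UNIV \<and> M ` (P ` K) = M ` K
           \<and> (\<forall>x. M (P x) = M x)
           \<and> sing_deg_std M b K = sing_deg_face (face_pt (P C) (P ` K)) (P ` K)" using r1 r2 r3 by blast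
  qed
qed

end
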